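(* Let $D,\chi,\varepsilon>0$, $a\ge 0$, $\beta\ge 0$, $b=D\beta^2$. Then there are no $0<r_0<r_1$ and functions $\rho\in C^0[0,\infty)$, $\phi\in C^2[0,\infty)$ with $\rho\ge0$, $\phi(0)\ge0$, such that $\rho\equiv 0$ on $[0,r_0]\cup[r_1,\infty)$, $\rho>0$ on $(r_0,r_1)$, $\rho$ is symmetric about $(r_0+r_1)/2$ on $(r_0,r_1)$ (i.e. $\rho(r_0+s)=\rho(r_1-s)$ for $s\in(0,r_1-r_0)$), $\rho$ is differentiable on $(r_0,r_1)$ with $\varepsilon\rho\rho_r=\chi\rho\phi_r$ there, and $D\phi_{rr}+D\frac{\phi_r}{r}+a\rho-b\phi=0$ on $(0,\infty)$.
   Context: The system $\partial_r(\frac{\varepsilon}{2}\rho^2)=\chi\rho\phi_r$, $D\phi_{rr}+D\phi_r/r+a\rho-b\phi=0$ is the radially symmetric stationary form of a hyperbolic-parabolic chemotaxis model on $\mathbb{R}^2$ with pressure $p(\rho)=\frac{\varepsilon}{2}\rho^2$; $r=|x|$. *)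

theory Defs
  imports "HOL-Analysis.Analysis"
begin

definition C2_on_nonneg :: "(real \<Rightarrow> real) \<Rightarrow> (real \<Rightarrow> real) \<Rightarrow> (real \<Rightarrow> real) \<Rightarrow> bool" where
  "C2_on_nonneg f f1 f2 \<longleftrightarrow>
     (\<forall>x\<ge>0. (f has_real_derivative f1 x) (at x within {0..})) \<and>
     (\<forall>x\<ge>0. (f1 has_real_derivative f2 x) (at x within {0..})) \<and>
     continuous_on {0..} f2"

end

theory Submission
  imports Defs
begin

lemma deriv_eq_open:
  fixes f g :: "real \<Rightarrow> real"
  assumes "open S" "x \<in> S" "\<And>t. t \<in> S \<Longrightarrow> f t = g t"
    "(f has_real_derivative f') (at x)" "(g has_real_derivative g') (at x)"
  shows "f' = g'"
proof -
  have "(g has_real_derivative f') (at x)"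
    using has_field_derivative_transform_within_open[OF assms(4) assms(1) assms(2)] assms(3) by blast
  then show ?thesis using assms(5) DERIV_unique by blast
qed

lemma at_pos: "(x::real) > 0 \<Longrightarrow> at x within {0..} = at x"
  by (rule at_within_interior) simp

theorem mainTheorem4:
  fixes D chi eps a \<beta> b :: real
  assumes "D > 0" "chi > 0" "eps > 0" "a \<ge> 0" "\<beta> \<ge> 0" "b = D * \<beta>\<^sup>2"
  shows "\<not> (\<exists>r0 r1 (\<rho>::real\<Rightarrow>real) \<rho>1 (\<phi>::real\<Rightarrow>real) \<phi>1 \<phi>2.
            0 < r0 \<and> r0 < r1 \<and>
            continuous_on {0..} \<rho> \<and>
            C2_on_nonneg \<phi> \<phi>1 \<phi>2 \<and>
            (\<forall>r\<ge>0. \<rho> r \<ge> 0) \<and> \<phi> 0 \<ge> 0 \<and>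
            (\<forall>r\<in>{0..r0} \<union> {r1..}. \<rho> r = 0) \<and>
            (\<forall>r\<in>{r0<..<r1}. \<rho> r > 0) \<and>
            (\<forall>s\<in>{0<..<r1 - r0}. \<rho> (r0 + s) = \<rho> (r1 - s)) \<and>
            (\<forall>r\<in>{r0<..<r1}. (\<rho> has_real_derivative \<rho>1 r) (at r) \<and>
                eps * \<rho> r * \<rho>1 r = chi * \<rho> r * \<phi>1 r) \<and>
            (\<forall>r>0. D * \<phi>2 r + D * \<phi>1 r / r + a * \<rho> r - b * \<phi> r = 0))"
proof
  assume "\<exists>r0 r1 (\<rho>::real\<Rightarrow>real) \<rho>1 (\<phi>::real\<Rightarrow>real) \<phi>1 \<phi>2.
            0 < r0 \<and> r0 < r1 \<and>
            continuous_on {0..} \<rho> \<and>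
            C2_on_nonneg \<phi> \<phi>1 \<phi>2 \<and>
            (\<forall>r\<ge>0. \<rho> r \<ge> 0) \<and> \<phi> 0 \<ge> 0 \<and>
            (\<forall>r\<in>{0..r0} \<union> {r1..}. \<rho> r = 0) \<and>
            (\<forall>r\<in>{r0<..<r1}. \<rho> r > 0) \<and>
            (\<forall>s\<in>{0<..<r1 - r0}. \<rho> (r0 + s) = \<rho> (r1 - s)) \<and>
            (\<forall>r\<in>{r0<..<r1}. (\<rho> has_real_derivative \<rho>1 r) (at r) \<and>
                eps * \<rho> r * \<rho>1 r = chi * \<rho> r * \<phi>1 r) \<and>
            (\<forall>r>0. D * \<phi>2 r + D * \<phi>1 r / r + a * \<rho> r - b * \<phi> r = 0)"
  then obtain r0 r1 \<rho> \<rho>1 \<phi> \<phi>1 \<phi>2 where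
    r0: "0 < r0" and r01: "r0 < r1" and cont: "continuous_on {0..} \<rho>" and
    C2: "C2_on_nonneg \<phi> \<phi>1 \<phi>2" and
    z: "\<forall>r\<in>{0..r0} \<union> {r1..}. \<rho> r = 0" and
    pos: "\<forall>r\<in>{r0<..<r1}. \<rho> r > 0" and
    sym: "\<forall>s\<in>{0<..<r1 - r0}. \<rho> (r0 + s) = \<rho> (r1 - s)" and
    dr: "\<forall>r\<in>{r0<..<r1}. (\<rho> has_real_derivative \<rho>1 r) (at r) \<and>
                eps * \<rho> r * \<rho>1 r = chi * \<rho> r * \<phi>1 r" and
    ode: "\<forall>r>0. D * \<phi>2 r + D * \<phi>1 r / r + a * \<rho> r - b * \<phi> r = 0"
    by blast
  define I where "I = {r0<..<r1}"
  have oI: "open I" and cI: "convex I" unfolding I_def by auto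
  have refl: "x \<in> I \<Longrightarrow> r0 + r1 - x \<in> I" for x unfolding I_def by auto
  have Ipos: "x \<in> I \<Longrightarrow> x > 0" for x using r0 unfolding I_def by auto
  have d1: "(\<phi> has_real_derivative \<phi>1 x) (at x)" if "x > 0" for x
    using C2 that at_pos[OF that] unfolding C2_on_nonneg_def by (metis less_eq_real_def)
  have d2: "(\<phi>1 has_real_derivative \<phi>2 x) (at x)" if "x > 0" for x
    using C2 that at_pos[OF that] unfolding C2_on_nonneg_def by (metis less_eq_real_def)
  have r1eq: "\<rho>1 x = chi / eps * \<phi>1 x" if "x \<in> I" for x
  proof -
    have "eps * \<rho> x * \<rho>1 x = chi * \<rho> x * \<phi>1 x" "\<rho> x > 0"
      using dr pos that unfolding I_def by auto
    then show ?thesis using assms(3) by (simp add: field_simps)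
  qed
  have "\<exists>c. \<forall>x\<in>I. \<rho> x - chi / eps * \<phi> x = c"
  proof (rule has_field_derivative_zero_constant[OF cI])
    fix x assume x: "x \<in> I"
    have "((\<lambda>x. \<rho> x - chi / eps * \<phi> x) has_real_derivative \<rho>1 x - chi / eps * \<phi>1 x) (at x)"
    proof -
      have "(\<rho> has_real_derivative \<rho>1 x) (at x)" using dr x unfolding I_def by auto
      then show ?thesis using d1[OF Ipos[OF x]]
        by (intro DERIV_diff DERIV_cmult)
    qed
    then show "((\<lambda>x. \<rho> x - chi / eps * \<phi> x) has_real_derivative 0) (at x within I)"
      using r1eq[OF x] by (simp add: has_field_derivative_at_within)
  qed
  then obtain c where c: "\<And>x. x \<in> I \<Longrightarrow> \<rho> x - chi / eps * \<phi> x = c" by blast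
  have rsym: "\<rho> x = \<rho> (r0 + r1 - x)" if "x \<in> I" for x
    using sym[rule_format, of "x - r0"] that unfolding I_def
    by (auto simp: algebra_simps)
  have psym: "\<phi> x = \<phi> (r0 + r1 - x)" if "x \<in> I" for x
  proof -
    have "\<rho> x - chi / eps * \<phi> x = \<rho> (r0 + r1 - x) - chi / eps * \<phi> (r0 + r1 - x)"
      using c[OF that] c[OF refl[OF that]] by simp
    then show ?thesis using rsym[OF that] assms(2,3) by simp
  qed
  have p1sym: "\<phi>1 x = - \<phi>1 (r0 + r1 - x)" if x: "x \<in> I" for x
  proof -
    have "((\<lambda>t. \<phi> (r0 + r1 - t)) has_real_derivative \<phi>1 (r0 + r1 - x) * (0 - 1)) (at x)"
      using d1[OF Ipos[OF refl[OF x]]]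
      by (intro DERIV_chain2[where f = \<phi>]) (auto intro!: derivative_eq_intros)
    then have "\<phi>1 x = \<phi>1 (r0 + r1 - x) * (0 - 1)"
      using deriv_eq_open[OF oI x psym d1[OF Ipos[OF x]]] by blast
    then show ?thesis by simp
  qed
  have p2sym: "\<phi>2 x = \<phi>2 (r0 + r1 - x)" if x: "x \<in> I" for x
  proof -
    have "((\<lambda>t. - \<phi>1 (r0 + r1 - t)) has_real_derivative - (\<phi>2 (r0 + r1 - x) * (0 - 1))) (at x)"
      using d2[OF Ipos[OF refl[OF x]]]
      by (intro DERIV_minus DERIV_chain2[where f = \<phi>1]) (auto intro!: derivative_eq_intros)
    then have "\<phi>2 x = - (\<phi>2 (r0 + r1 - x) * (0 - 1))"
      using deriv_eq_open[OF oI x p1sym d2[OF Ipos[OF x]]] by blast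
    then show ?thesis by simp
  qed
  have p1z: "\<phi>1 x = 0" if x: "x \<in> I" for x
  proof -
    define y where "y = r0 + r1 - x"
    have xp: "x > 0" and yp: "y > 0" using Ipos[OF x] Ipos[OF refl[OF x]] unfolding y_def by auto
    have "D * \<phi>2 x + D * \<phi>1 x / x + a * \<rho> x - b * \<phi> x = 0"
         "D * \<phi>2 y + D * \<phi>1 y / y + a * \<rho> y - b * \<phi> y = 0"
      using ode xp yp by auto
    moreover have "\<phi>2 x = \<phi>2 y" "\<rho> x = \<rho> y" "\<phi> x = \<phi> y" "\<phi>1 y = - \<phi>1 x"
      using p2sym[OF x] rsym[OF x] psym[OF x] p1sym[OF x] unfolding y_def by auto
    ultimately have "D * (\<phi>1 x / x + \<phi>1 x / y) = 0" by (simp add: algebra_simps)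
    then have "\<phi>1 x / x + \<phi>1 x / y = 0" using assms(1) by simp
    then have "\<phi>1 x * (1/x + 1/y) = 0" by (simp add: distrib_left)
    moreover have "1/x + 1/y > 0" using xp yp by (simp add: add_pos_pos)
    ultimately show ?thesis by simp
  qed
  have "\<exists>k. \<forall>x\<in>I. \<rho> x = k"
  proof (rule has_field_derivative_zero_constant[OF cI])
    fix x assume x: "x \<in> I"
    have "(\<rho> has_real_derivative \<rho>1 x) (at x)" using dr x unfolding I_def by auto
    then show "(\<rho> has_real_derivative 0) (at x within I)"
      using r1eq[OF x] p1z[OF x] by (simp add: has_field_derivative_at_within)
  qed
  then obtain k where k: "\<And>x. x \<in> I \<Longrightarrow> \<rho> x = k" by blast
  have kpos: "k > 0" using k pos r01 unfolding I_def
    by (metis dense greaterThanLessThan_iff)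
  have "(\<rho> \<longlongrightarrow> \<rho> r0) (at r0 within {0..})"
    using cont r0 by (simp add: continuous_on_def)
  then have "(\<rho> \<longlongrightarrow> \<rho> r0) (at_right r0)"
    by (rule tendsto_within_subset) (use r0 in auto)
  moreover have "\<rho> r0 = 0" using z r0 by auto
  moreover have "eventually (\<lambda>x. \<rho> x = k) (at_right r0)"
    unfolding eventually_at_right_field using r01 k unfolding I_def by auto
  ultimately have "((\<lambda>_. k) \<longlongrightarrow> 0) (at_right r0)"
    using Lim_transform_eventually by fastforce
  then have "k = 0" using tendsto_const tendsto_unique trivial_limit_at_right_real by blast
  then show False using kpos by simp
qed

end
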